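(* Let $a,b,d\in\mathbb C$ with $a\notin\mathbb Z$ and $d\notin\{0,-1,-2,\dots\}$. Then, as an identity of formal power series in $x,y$, $$\mathrm H_3(a,b;d;x,y)=F(a,b;d;x)\,{}_0F_1(1-a;-y)+\sum_{k=1}^\infty\sum_{l=1}^k\frac{(-1)^{k+l}(k-1)!}{(l-1)!\,l!\,(k-l)!}\,\frac{(b)_k}{(1-a)_l(d)_k}\,x^ky^l\,F(a+k,b+k;d+k;x)\,{}_0F_1(1-a+l;-y).$$
   Context: Pochhammer symbol: $(\lambda)_k=\Gamma(\lambda+k)/\Gamma(\lambda)$ for every integer $k$ (possibly negative) whenever defined; $(\lambda)_0=1$. $F(a,b;c;x)=\sum_{k\ge0}\frac{(a)_k(b)_k}{(c)_k k!}x^k$, ${}_0F_1(c;x)=\sum_{k\ge0}\frac{x^k}{(c)_k k!}$. Confluent Horn function $\mathrm H_3(a,b;d;x,y)=\sum_{p,q\ge0}\frac{(a)_{p-q}(b)_p}{(d)_p\,p!\,q!}x^py^q$. All functions are regarded as formal power series in $x,y$; the infinite double sum converges in the formal (degree) topology. *)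

theory Defs
  imports Complex_Main "HOL-Library.Nonpos_Ints" "HOL-Computational_Algebra.Formal_Power_Series"
begin

(* Pochhammer symbol with integer index: (lam)_k = Gamma(lam+k)/Gamma(lam).
   For k >= 0 this is the rising factorial; for k < 0 it equals
   1 / ((lam+k)(lam+k+1)...(lam-1)). *)
definition pochZ :: "complex \<Rightarrow> int \<Rightarrow> complex" where
  "pochZ lam k = (if 0 \<le> k then pochhammer lam (nat k)
                  else 1 / pochhammer (lam + of_int k) (nat (- k)))"

(* Bivariate formal power series in x,y over C are represented as
   complex fps fps: outer variable x, inner variable y.
   The coefficient of x^m y^n of S is  (S $ m) $ n. *)
type_synonym bfps = "complex fps fps"

definition bX :: bfps where "bX = fps_X"
definition bY :: bfps where "bY = fps_const fps_X"
definition bconst :: "complex \<Rightarrow> bfps" where "bconst c = fps_const (fps_const c)"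

definition in_x :: "complex fps \<Rightarrow> bfps" where "in_x f = Abs_fps (\<lambda>m. fps_const (fps_nth f m))"
definition in_y :: "complex fps \<Rightarrow> bfps" where "in_y g = fps_const g"

definition hyp2F1 :: "complex \<Rightarrow> complex \<Rightarrow> complex \<Rightarrow> complex fps" where
  "hyp2F1 a b c = Abs_fps (\<lambda>k. pochhammer a k * pochhammer b k / (pochhammer c k * fact k))"

definition hyp0F1 :: "complex \<Rightarrow> complex fps" where
  "hyp0F1 c = Abs_fps (\<lambda>k. 1 / (pochhammer c k * fact k))"

definition horn_H3 :: "complex \<Rightarrow> complex \<Rightarrow> complex \<Rightarrow> bfps" where
  "horn_H3 a b d = Abs_fps (\<lambda>p. Abs_fps (\<lambda>q.
      pochZ a (int p - int q) * pochhammer b p / (pochhammer d p * fact p * fact q)))"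

end

theory Submission
  imports Defs
begin

unbundle fps_syntax


lemma vand_nat:
  assumes "1 \<le> k"
  shows "(\<Sum>l\<in>{1..k}. (k-1 choose (l-1)) * (n choose l)) = (n+k-1) choose k"
proof -
  have "(n+k-1) choose k = (\<Sum>i\<le>k. ((k-1) choose i) * (n choose (k - i)))"
    proof -
      have "k - 1 + n = n + k - 1" using assms by simp
      then show ?thesis using vandermonde[of "k-1" n k] by simp
    qed
  also have "\<dots> = (\<Sum>l\<le>k. ((k-1) choose (k-l)) * (n choose l))"
    by (rule sum.reindex_bij_witness[where i="\<lambda>l. k - l" and j="\<lambda>i. k - i"]) auto
  also have "\<dots> = (\<Sum>l\<in>insert 0 {1..k}. ((k-1) choose (k-l)) * (n choose l))"
    by (rule sum.cong) auto
  also have "\<dots> = (\<Sum>l\<in>{1..k}. ((k-1) choose (k-l)) * (n choose l))"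
    using assms by (subst sum.insert) auto
  also have "\<dots> = (\<Sum>l\<in>{1..k}. (k-1 choose (l-1)) * (n choose l))"
  proof (rule sum.cong)
    fix l assume l: "l \<in> {1..k}"
    then have "k - l = (k-1) - (l-1)" by auto
    then show "((k-1) choose (k-l)) * (n choose l) = (k-1 choose (l-1)) * (n choose l)"
      using l binomial_symmetric[of "l-1" "k-1"] by (metis atLeastAtMost_iff diff_le_mono)
  qed simp
  finally show ?thesis ..
qed

lemma choose_poch:
  assumes "1 \<le> k"
  shows "(of_nat ((n+k-1) choose k) :: complex) = pochhammer (of_nat n) k / fact k"
proof (cases n)
  case 0
  then show ?thesis using assms by (simp add: pochhammer_0_left)
next
  case (Suc n')
  have "(of_nat ((n+k-1) choose k) :: complex) = of_nat (n+k-1) gchoose k"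
    by (simp add: binomial_gbinomial)
  also have "\<dots> = pochhammer (of_nat (n+k-1) - of_nat k + 1) k / fact k"
    by (rule gbinomial_pochhammer')
  also have "of_nat (n+k-1) - of_nat k + 1 = (of_nat n :: complex)"
    using Suc by (simp add: of_nat_diff)
  finally show ?thesis .
qed

lemma choose_poch_m:
  assumes "k \<le> m"
  shows "(-1)^k * (fact m / fact (m-k)) = (pochhammer (- of_nat m) k :: complex)"
proof -
  have "(of_nat (m choose k) :: complex) = of_nat m gchoose k"
    by (simp add: binomial_gbinomial)
  also have "\<dots> = (- 1) ^ k * pochhammer (- of_nat m) k / fact k"
    by (rule gbinomial_pochhammer)
  finally have e: "(of_nat (m choose k) :: complex) = (- 1) ^ k * pochhammer (- of_nat m) k / fact k" .
  have "fact m / fact (m-k) = (of_nat (m choose k) :: complex) * fact k"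
    using binomial_fact[OF assms, where 'a=complex] by (simp add: field_simps)
  then show ?thesis using e by (simp add: field_simps)
qed

lemma poch_nz: "(z::complex) \<notin> \<int> \<Longrightarrow> pochhammer z j \<noteq> 0"
  by (auto simp: pochhammer_eq_0_iff)

lemma notZ_shift: "(a::complex) \<notin> \<int> \<Longrightarrow> a + of_nat k \<notin> \<int> \<and> 1 - a + of_nat k \<notin> \<int> \<and> 1 - a - of_nat k \<notin> \<int> \<and> 1 - a \<notin> \<int>"
proof (intro conjI notI)
  assume a: "a \<notin> \<int>"
  show False if "a + of_nat k \<in> \<int>"
  proof -
    have "a + of_nat k - of_nat k \<in> \<int>" using that by (intro Ints_diff) auto
    then show False using a by simp
  qed
  show False if "1 - a + of_nat k \<in> \<int>"
  proof -
    have "1 + of_nat k - (1 - a + of_nat k) \<in> \<int>" using that by (intro Ints_diff) auto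
    then show False using a by simp
  qed
  show False if "1 - a - of_nat k \<in> \<int>"
  proof -
    have "1 - of_nat k - (1 - a - of_nat k) \<in> \<int>" using that by (intro Ints_diff) auto
    then show False using a by simp
  qed
  show False if "1 - a \<in> \<int>"
  proof -
    have "1 - (1 - a) \<in> \<int>" using that by (intro Ints_diff) auto
    then show False using a by simp
  qed
qed

lemma poch_nz_d: "(d::complex) \<notin> \<int>\<^sub>\<le>\<^sub>0 \<Longrightarrow> pochhammer (d + of_nat k) j \<noteq> 0"
proof
  assume d: "d \<notin> \<int>\<^sub>\<le>\<^sub>0" and "pochhammer (d + of_nat k) j = 0"
  then obtain i where "d + of_nat k = - of_nat i" by (auto simp: pochhammer_eq_0_iff)
  then have "d = - of_nat (i + k)" by (simp add: algebra_simps)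
  moreover have "- (of_nat (i + k)::complex) \<in> \<int>\<^sub>\<le>\<^sub>0" by (rule minus_of_nat_in_nonpos_Ints)
  ultimately show False using d by metis
qed

lemma final_ratio:
  fixes a :: complex assumes a: "a \<notin> \<int>"
  shows "pochhammer (a - of_nat n) m / pochhammer a m = pochhammer (1-a) n / pochhammer (1 - a - of_nat m) n"
proof -
  have nz1: "pochhammer a m \<noteq> 0" using poch_nz a by blast
  have nz2: "pochhammer (1 - a - of_nat m) n \<noteq> 0" using poch_nz notZ_shift a by blast
  have e1: "pochhammer (1-a) n = (-1)^n * pochhammer (a - of_nat n) n"
    using pochhammer_minus[of "a - 1" n] by (simp add: algebra_simps)
  have e2: "pochhammer (1 - a - of_nat m) n = (-1)^n * pochhammer (a - of_nat n + of_nat m) n"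
    using pochhammer_minus[of "a + of_nat m - 1" n] by (simp add: algebra_simps)
  have e3: "pochhammer (a - of_nat n) m * pochhammer (a - of_nat n + of_nat m) n
        = pochhammer (a - of_nat n) n * pochhammer a m"
    using pochhammer_product'[of "a - of_nat n" m n] pochhammer_product'[of "a - of_nat n" n m]
    by (simp add: add.commute)
  show ?thesis using nz1 nz2 e1 e2 e3
    by (simp add: divide_simps)
qed


lemma core:
  fixes a :: complex assumes a: "a \<notin> \<int>"
  shows "pochhammer (1-a) n / pochhammer (1 - a - of_nat m) n =
   1 + (\<Sum>k\<in>{1..m}. \<Sum>l\<in>{1..k}. if l \<le> n then (-1)^k * (fact m / fact (m-k)) / pochhammer a k
        * (fact (k-1)/(fact (l-1)*fact (k-l))) * (fact n/(fact l * fact (n-l))) else 0)"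
proof -
  have inner: "(\<Sum>l\<in>{1..k}. if l \<le> n then (-1)^k * (fact m / fact (m-k)) / pochhammer a k
        * (fact (k-1)/(fact (l-1)*fact (k-l))) * (fact n/(fact l * fact (n-l))) else 0)
     = pochhammer (of_nat n) k * pochhammer (- of_nat m) k / (fact k * pochhammer a k)"
    if k: "k \<in> {1..m}" for k
  proof -
    have "(\<Sum>l\<in>{1..k}. if l \<le> n then (-1)^k * (fact m / fact (m-k)) / pochhammer a k
        * (fact (k-1)/(fact (l-1)*fact (k-l))) * (fact n/(fact l * fact (n-l))) else 0)
      = (\<Sum>l\<in>{1..k}. ((-1)^k * (fact m / fact (m-k)) / pochhammer a k) *
           of_nat ((k-1 choose (l-1)) * (n choose l)))"
    proof (rule sum.cong)
      fix l assume l: "l \<in> {1..k}"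
      have c1: "fact (k-1)/(fact (l-1)*fact (k-l)) = (of_nat (k-1 choose (l-1)) :: complex)"
      proof -
        have e: "k - 1 - (l - 1) = k - l" using l by auto
        have "l - 1 \<le> k - 1" using l by auto
        from binomial_fact[OF this, where 'a=complex] e show ?thesis by simp
      qed
      show "(if l \<le> n then (-1)^k * (fact m / fact (m-k)) / pochhammer a k
        * (fact (k-1)/(fact (l-1)*fact (k-l))) * (fact n/(fact l * fact (n-l))) else 0) =
          ((-1)^k * (fact m / fact (m-k)) / pochhammer a k) *
           of_nat ((k-1 choose (l-1)) * (n choose l))"
      proof (cases "l \<le> n")
        case True
        then show ?thesis using c1 binomial_fact[OF True, where 'a=complex] by simp
      next
        case False
        then show ?thesis by simp
      qed
    qed simp
    also have "\<dots> = ((-1)^k * (fact m / fact (m-k)) / pochhammer a k) *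
           of_nat (\<Sum>l\<in>{1..k}. (k-1 choose (l-1)) * (n choose l))"
      by (simp add: sum_distrib_left)
    also have "\<dots> = ((-1)^k * (fact m / fact (m-k)) / pochhammer a k) * of_nat ((n+k-1) choose k)"
      using vand_nat[of k n] k by simp
    also have "\<dots> = pochhammer (- of_nat m) k / pochhammer a k * (pochhammer (of_nat n) k / fact k)"
      using choose_poch[of k n] choose_poch_m[of k m] k by simp
    finally show ?thesis by (simp add: ac_simps)
  qed
  have c: "\<forall>i\<in>{0..<m}. a \<noteq> - of_nat i"
    using a by (metis Ints_minus Ints_of_nat)
  have "pochhammer (a - of_nat n) m / pochhammer a m =
     (\<Sum>k\<in>{0..m}. pochhammer (of_nat n) k * pochhammer (- of_nat m) k / (fact k * pochhammer a k))"
    using Vandermonde_pochhammer[OF c, of "of_nat n"] by simp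
  also have "\<dots> = 1 + (\<Sum>k\<in>{1..m}. pochhammer (of_nat n) k * pochhammer (- of_nat m) k / (fact k * pochhammer a k))"
    by (simp add: sum.atLeast_Suc_atMost)
  also have "\<dots> = 1 + (\<Sum>k\<in>{1..m}. \<Sum>l\<in>{1..k}. if l \<le> n then (-1)^k * (fact m / fact (m-k)) / pochhammer a k
        * (fact (k-1)/(fact (l-1)*fact (k-l))) * (fact n/(fact l * fact (n-l))) else 0)"
    using inner by simp
  finally show ?thesis using final_ratio[OF a] by simp
qed




lemma in_x_nth[simp]: "in_x F $ j = fps_const (F $ j)"
  by (simp add: in_x_def)

lemma comp_negX_nth: "((f::complex fps) oo - fps_X) $ j = (-1)^j * f $ j"
proof -
  have p: "((- fps_X) ^ i :: complex fps) = fps_const ((-1)^i) * fps_X ^ i" for i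
  proof -
    have "(- fps_X :: complex fps) = fps_const (-1) * fps_X" by (simp add: fps_eq_iff)
    then show ?thesis by (simp add: power_mult_distrib fps_const_power)
  qed
  have "(f oo - fps_X) $ j = (\<Sum>i\<in>{0..j}. f $ i * (if i = j then (-1)^i else 0))"
    unfolding fps_compose_nth by (intro sum.cong) (auto simp: p fps_X_power_nth)
  also have "\<dots> = (\<Sum>i\<in>{0..j}. if i = j then f $ i * (-1)^i else 0)"
    by (intro sum.cong) auto
  also have "\<dots> = (-1)^j * f $ j" by (simp add: sum.delta)
  finally show ?thesis .
qed

lemma hyp0F1_neg_nth: "(hyp0F1 c oo - fps_X) $ j = (-1)^j / (pochhammer c j * fact j)"
  by (simp add: comp_negX_nth hyp0F1_def)

lemma term_nth:
  "(bconst c * bX ^ k * bY ^ l * in_x F * in_y G) $ m $ n =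
     (if k \<le> m \<and> l \<le> n then c * F $ (m-k) * G $ (n-l) else 0)"
proof -
  have e: "bconst c * bX ^ k * bY ^ l * in_x F * in_y G =
      fps_X ^ k * (fps_const (fps_const c * fps_X ^ l * G) * in_x F)"
    unfolding bconst_def bX_def bY_def in_y_def
    by (simp add: fps_const_power[symmetric] fps_const_mult[symmetric] del: fps_const_power fps_const_mult)
  have u: "(fps_const c * fps_X ^ l * G) $ n = (if l \<le> n then c * G $ (n - l) else 0)"
    using fps_X_power_mult_nth[of l G n] by (simp add: mult.assoc)
  have "(fps_const (fps_const c * fps_X ^ l * G) * in_x F) $ j $ n
       = (fps_const c * fps_X ^ l * G) $ n * F $ j" for j
    by simp
  note h = this
  have "(bconst c * bX ^ k * bY ^ l * in_x F * in_y G) $ m $ n =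
     (if m < k then 0 else (fps_const (fps_const c * fps_X ^ l * G) * in_x F) $ (m-k) $ n)"
    by (simp only: e fps_X_power_mult_nth) simp
  then show ?thesis
    by (simp only: h u) (auto simp: mult.commute mult.left_commute)
qed

lemma first_nth:
  "(in_x F * in_y G) $ m $ n = F $ m * G $ n"
  by (simp add: in_y_def)




lemma pochZ_rel:
  fixes a :: complex assumes a: "a \<notin> \<int>"
  shows "pochZ a (int m - int n) = pochhammer a m * (-1)^n / pochhammer (1 - a - of_nat m) n"
proof -
  have nz: "pochhammer (1 - a - of_nat m) n \<noteq> 0" using poch_nz notZ_shift a by blast
  have e2: "pochhammer (1 - a - of_nat m) n = (-1)^n * pochhammer (a + of_nat m - of_nat n) n"
    using pochhammer_minus[of "a + of_nat m - 1" n] by (simp add: algebra_simps)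
  have key: "pochZ a (int m - int n) * pochhammer (a + of_nat m - of_nat n) n = pochhammer a m"
  proof (cases "n \<le> m")
    case True
    then have "pochZ a (int m - int n) = pochhammer a (m - n)" by (simp add: pochZ_def nat_diff_distrib)
    moreover have "pochhammer a m = pochhammer a (m - n) * pochhammer (a + of_nat (m - n)) n"
      using pochhammer_product'[of a "m-n" n] True by simp
    ultimately show ?thesis using True by (simp add: of_nat_diff algebra_simps)
  next
    case False
    have i: "int m - int n = - int (n - m)" using False by simp
    have pz: "pochZ a (int m - int n) = 1 / pochhammer (a - of_nat (n - m)) (n - m)"
    proof -
      have h1: "nat (int n - int m) = n - m" by simp
      have h3: "(of_nat (n-m)::complex) = of_nat n - of_nat m" using False by (simp add: of_nat_diff)
      show ?thesis unfolding pochZ_def using False h1 h3 by (simp add: algebra_simps)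
    qed
    have pp: "pochhammer (a - of_nat (n - m)) n =
        pochhammer (a - of_nat (n - m)) (n - m) * pochhammer a m"
      using pochhammer_product'[of "a - of_nat (n - m)" "n-m" m] False by simp
    have e: "a + of_nat m - of_nat n = a - of_nat (n - m)" using False by (simp add: of_nat_diff)
    have nz: "pochhammer (a - of_nat (n - m)) (n - m) \<noteq> 0"
    proof -
      have "a - of_nat (n - m) \<notin> \<int>"
      proof
        assume "a - of_nat (n - m) \<in> \<int>"
        then have "a - of_nat (n - m) + of_nat (n - m) \<in> \<int>" by (intro Ints_add) auto
        then show False using a by simp
      qed
      then show ?thesis using poch_nz by blast
    qed
    show ?thesis unfolding e pz pp using nz by simp
  qed
  show ?thesis using key nz e2 by (simp add: field_simps)
qed

lemma alg:
  fixes ak ak' am bk bk' bm dk dk' dm al al' an fl1 fl fkl fk1 fmk fm fn fnl s1 s2 sn sk :: complex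
  assumes "am = ak * ak'" "bm = bk * bk'" "dm = dk * dk'" "an = al * al'" "s1 * s2 = sn * sk"
    and "ak \<noteq> 0" "dk \<noteq> 0" "dk' \<noteq> 0" "al \<noteq> 0" "al' \<noteq> 0" "fl1 \<noteq> 0" "fl \<noteq> 0" "fkl \<noteq> 0"
     "fmk \<noteq> 0" "fm \<noteq> 0" "fn \<noteq> 0" "fnl \<noteq> 0"
  shows "(s1 * fk1 / (fl1 * fl * fkl) * bk / (al * dk)) * (ak' * bk' / (dk' * fmk)) * (s2 / (al' * fnl))
     = (am * bm * sn / (dm * fm * an * fn)) * (sk * (fm / fmk) / ak * (fk1 / (fl1 * fkl)) * (fn / (fl * fnl)))"
  using assms by (simp add: field_simps)

lemma coef_identity:
  fixes a b d :: complex
  assumes a: "a \<notin> \<int>" and d: "d \<notin> \<int>\<^sub>\<le>\<^sub>0"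
  shows "pochZ a (int m - int n) * pochhammer b m / (pochhammer d m * fact m * fact n) =
    pochhammer a m * pochhammer b m / (pochhammer d m * fact m) * ((-1)^n / (pochhammer (1-a) n * fact n))
    + (\<Sum>k\<le>m. \<Sum>l\<in>{1..k}. if k \<le> m \<and> l \<le> n then
        ((-1) ^ (k + l) * fact (k - 1) / (fact (l - 1) * fact l * fact (k - l))
             * pochhammer b k / (pochhammer (1 - a) l * pochhammer d k))
        * (pochhammer (a + of_nat k) (m-k) * pochhammer (b + of_nat k) (m-k) / (pochhammer (d + of_nat k) (m-k) * fact (m-k)))
        * ((-1)^(n-l) / (pochhammer (1 - a + of_nat l) (n-l) * fact (n-l))) else 0)"
proof -
  define D where "D = pochhammer a m * pochhammer b m * (-1)^n / (pochhammer d m * fact m * pochhammer (1-a) n * fact n)"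
  define W where "W = (\<lambda>k l. (-1)^k * (fact m / fact (m-k)) / pochhammer a k
        * (fact (k-1)/(fact (l-1)*fact (k-l))) * (fact n/(fact l * fact (n-l))) :: complex)"
  have nzd: "pochhammer (d + of_nat k) j \<noteq> 0" for k j using poch_nz_d[OF d] .
  have nzd0: "pochhammer d j \<noteq> 0" for j using poch_nz_d[OF d, of 0] by simp
  have nza: "pochhammer (a + of_nat k) j \<noteq> 0" for k j using poch_nz notZ_shift a by blast
  have nza0: "pochhammer a j \<noteq> 0" for j using poch_nz a by blast
  have nzb: "pochhammer (1 - a + of_nat k) j \<noteq> 0" for k j using poch_nz notZ_shift a by blast
  have nzb0: "pochhammer (1 - a) j \<noteq> 0" for j using poch_nz notZ_shift a by blast
  have nzc: "pochhammer (1 - a - of_nat m) n \<noteq> 0" using poch_nz notZ_shift a by blast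
  have lhs: "pochZ a (int m - int n) * pochhammer b m / (pochhammer d m * fact m * fact n)
      = D * (pochhammer (1-a) n / pochhammer (1 - a - of_nat m) n)"
    unfolding pochZ_rel[OF a] D_def using nzc nzb0 nzd0 by (simp add: field_simps)
  have fst: "pochhammer a m * pochhammer b m / (pochhammer d m * fact m) * ((-1)^n / (pochhammer (1-a) n * fact n)) = D"
    unfolding D_def by (simp add: field_simps)
  have trm: "((-1) ^ (k + l) * fact (k - 1) / (fact (l - 1) * fact l * fact (k - l))
             * pochhammer b k / (pochhammer (1 - a) l * pochhammer d k))
        * (pochhammer (a + of_nat k) (m-k) * pochhammer (b + of_nat k) (m-k) / (pochhammer (d + of_nat k) (m-k) * fact (m-k)))
        * ((-1)^(n-l) / (pochhammer (1 - a + of_nat l) (n-l) * fact (n-l))) = D * W k l"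
    if kl: "k \<in> {1..m}" "l \<in> {1..k}" "l \<le> n" for k l
  proof -
    have km: "k \<le> m" using kl by auto
    have s: "(-1::complex) ^ (k + l) * (-1) ^ (n - l) = (-1)^n * (-1)^k"
    proof -
      have "k + l + (n - l) = n + k" using kl by auto
      then show ?thesis by (metis power_add)
    qed
    show ?thesis unfolding D_def W_def
      by (rule alg[OF pochhammer_product[OF km] pochhammer_product[OF km] pochhammer_product[OF km]
            pochhammer_product[OF kl(3)] s nza0 nzd0 nzd nzb0 nzb]) auto
  qed
  have sum0: "(\<Sum>k\<le>m. \<Sum>l\<in>{1..k}. if k \<le> m \<and> l \<le> n then
        ((-1) ^ (k + l) * fact (k - 1) / (fact (l - 1) * fact l * fact (k - l))
             * pochhammer b k / (pochhammer (1 - a) l * pochhammer d k))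
        * (pochhammer (a + of_nat k) (m-k) * pochhammer (b + of_nat k) (m-k) / (pochhammer (d + of_nat k) (m-k) * fact (m-k)))
        * ((-1)^(n-l) / (pochhammer (1 - a + of_nat l) (n-l) * fact (n-l))) else 0)
     = (\<Sum>k\<in>{1..m}. \<Sum>l\<in>{1..k}. if l \<le> n then D * W k l else 0)"
  proof -
    have "{..m} = insert 0 {1..m}" by auto
    then have "(\<Sum>k\<le>m. \<Sum>l\<in>{1..k}. if k \<le> m \<and> l \<le> n then
        ((-1) ^ (k + l) * fact (k - 1) / (fact (l - 1) * fact l * fact (k - l))
             * pochhammer b k / (pochhammer (1 - a) l * pochhammer d k))
        * (pochhammer (a + of_nat k) (m-k) * pochhammer (b + of_nat k) (m-k) / (pochhammer (d + of_nat k) (m-k) * fact (m-k)))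
        * ((-1)^(n-l) / (pochhammer (1 - a + of_nat l) (n-l) * fact (n-l))) else 0)
      = (\<Sum>k\<in>{1..m}. \<Sum>l\<in>{1..k}. if k \<le> m \<and> l \<le> n then
        ((-1) ^ (k + l) * fact (k - 1) / (fact (l - 1) * fact l * fact (k - l))
             * pochhammer b k / (pochhammer (1 - a) l * pochhammer d k))
        * (pochhammer (a + of_nat k) (m-k) * pochhammer (b + of_nat k) (m-k) / (pochhammer (d + of_nat k) (m-k) * fact (m-k)))
        * ((-1)^(n-l) / (pochhammer (1 - a + of_nat l) (n-l) * fact (n-l))) else 0)"
      by (simp add: sum.insert)
    also have "\<dots> = (\<Sum>k\<in>{1..m}. \<Sum>l\<in>{1..k}. if l \<le> n then D * W k l else 0)"
    proof (intro sum.cong refl)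
      fix k l assume k: "k \<in> {1..m}" and l: "l \<in> {1..k}"
      show "(if k \<le> m \<and> l \<le> n then
        ((-1) ^ (k + l) * fact (k - 1) / (fact (l - 1) * fact l * fact (k - l))
             * pochhammer b k / (pochhammer (1 - a) l * pochhammer d k))
        * (pochhammer (a + of_nat k) (m-k) * pochhammer (b + of_nat k) (m-k) / (pochhammer (d + of_nat k) (m-k) * fact (m-k)))
        * ((-1)^(n-l) / (pochhammer (1 - a + of_nat l) (n-l) * fact (n-l))) else 0) =
        (if l \<le> n then D * W k l else 0)"
      proof (cases "l \<le> n")
        case True
        then have c: "k \<le> m \<and> l \<le> n" using k by auto
        show ?thesis by (simp only: if_P[OF c] if_P[OF True] trm[OF k l True])
      next
        case False
        then have c: "\<not> (k \<le> m \<and> l \<le> n)" by auto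
        show ?thesis by (simp only: if_not_P[OF c] if_not_P[OF False])
      qed
    qed
    finally show ?thesis .
  qed
  have "D * (pochhammer (1-a) n / pochhammer (1 - a - of_nat m) n)
      = D + (\<Sum>k\<in>{1..m}. \<Sum>l\<in>{1..k}. if l \<le> n then D * W k l else 0)"
    unfolding core[OF a, of n m] W_def
    by (simp add: distrib_left sum_distrib_left if_distrib mult.assoc cong: if_cong)
  then show ?thesis using lhs fst sum0 by simp
qed

lemma hyp2F1_nth: "hyp2F1 a b c $ k = pochhammer a k * pochhammer b k / (pochhammer c k * fact k)"
  by (simp add: hyp2F1_def)

theorem mainTheorem6:
  fixes a b d :: complex
  assumes "a \<notin> \<int>" and "d \<notin> \<int>\<^sub>\<le>\<^sub>0"
  defines "T \<equiv> (\<lambda>k::nat. \<Sum>l\<in>{1..k}.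
     bconst ((-1) ^ (k + l) * fact (k - 1) / (fact (l - 1) * fact l * fact (k - l))
             * pochhammer b k / (pochhammer (1 - a) l * pochhammer d k))
     * bX ^ k * bY ^ l
     * in_x (hyp2F1 (a + of_nat k) (b + of_nat k) (d + of_nat k))
     * in_y (hyp0F1 (1 - a + of_nat l) oo (- fps_X)))"
  shows "summable T \<and>
    horn_H3 a b d = in_x (hyp2F1 a b d) * in_y (hyp0F1 (1 - a) oo (- fps_X)) + (\<Sum>k. T k)"
proof -
  have Tnth: "T k $ m $ n = (\<Sum>l\<in>{1..k}. if k \<le> m \<and> l \<le> n then
        ((-1) ^ (k + l) * fact (k - 1) / (fact (l - 1) * fact l * fact (k - l))
             * pochhammer b k / (pochhammer (1 - a) l * pochhammer d k))
        * (pochhammer (a + of_nat k) (m-k) * pochhammer (b + of_nat k) (m-k) / (pochhammer (d + of_nat k) (m-k) * fact (m-k)))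
        * ((-1)^(n-l) / (pochhammer (1 - a + of_nat l) (n-l) * fact (n-l))) else 0)" for k m n
    unfolding T_def by (simp only: fps_sum_nth term_nth hyp2F1_nth hyp0F1_neg_nth)
  have T0: "T k $ m = 0" if "m < k" for k m
    using that by (simp add: fps_eq_iff Tnth)
  define S where "S = Abs_fps (\<lambda>m. \<Sum>k\<le>m. T k $ m)"
  have sums: "T sums S"
    unfolding sums_def
  proof (rule tendsto_fpsI)
    fix j
    show "\<forall>\<^sub>F N in sequentially. (\<Sum>k<N. T k) $ j = S $ j"
    proof (rule eventually_sequentiallyI[of "Suc j"])
      fix N assume N: "Suc j \<le> N"
      have "(\<Sum>k<N. T k) $ j = (\<Sum>k<N. T k $ j)" by (simp add: fps_sum_nth)
      also have "\<dots> = (\<Sum>k\<le>j. T k $ j)"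
        by (rule sum.mono_neutral_right) (use N T0 in auto)
      finally show "(\<Sum>k<N. T k) $ j = S $ j" by (simp add: S_def)
    qed
  qed
  have sT: "summable T" using sums by (rule sums_summable)
  have suminf: "(\<Sum>k. T k) = S" using sums by (rule sums_unique[symmetric])
  have eq: "horn_H3 a b d = in_x (hyp2F1 a b d) * in_y (hyp0F1 (1 - a) oo (- fps_X)) + S"
  proof (rule fps_ext)
    fix m
    show "horn_H3 a b d $ m = (in_x (hyp2F1 a b d) * in_y (hyp0F1 (1 - a) oo (- fps_X)) + S) $ m"
    proof (rule fps_ext)
      fix n
      have "(in_x (hyp2F1 a b d) * in_y (hyp0F1 (1 - a) oo (- fps_X)) + S) $ m $ n
          = pochhammer a m * pochhammer b m / (pochhammer d m * fact m) * ((-1)^n / (pochhammer (1-a) n * fact n))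
            + (\<Sum>k\<le>m. T k $ m $ n)"
        by (simp only: fps_add_nth first_nth hyp2F1_nth hyp0F1_neg_nth S_def fps_nth_Abs_fps fps_sum_nth)
      also have "\<dots> = pochZ a (int m - int n) * pochhammer b m / (pochhammer d m * fact m * fact n)"
        unfolding Tnth by (rule coef_identity[OF assms(1,2), symmetric])
      also have "\<dots> = horn_H3 a b d $ m $ n" by (simp add: horn_H3_def)
      finally show "horn_H3 a b d $ m $ n = (in_x (hyp2F1 a b d) * in_y (hyp0F1 (1 - a) oo (- fps_X)) + S) $ m $ n" ..
    qed
  qed
  show ?thesis using sT eq suminf by simp
qed


end
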